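(* Let $m\ge 2$, let $A=(a_{ij})$ be a nonsingular $2m\times 2m$ skew-symmetric complex matrix and let $\ell=(\ell_1,\dots,\ell_m)\in\mathbb{N}^m$. Consider on $\mathbb{C}^{2m}$ with coordinates $(z_1,\dots,z_{2m})$ the holomorphic one-forms $$\Omega_{\mathbb{J}(2m)}=\sum_{j=1}^m\big(z_{2j-1}\,dz_{2j}-z_{2j}\,dz_{2j-1}\big),\qquad \Omega_A=\sum_{i,j=1}^{2m}a_{ij}\,z_i\,dz_j,$$ $$\Omega_{(\ell)}=\sum_{j=1}^m\big[z_{2j-1}\,dz_{2j}-(\ell_j z_{2j}+z_{2j-1}^{\ell_j})\,dz_{2j-1}\big].$$ Then none of the distributions $\operatorname{Ker}(\Omega_{\mathbb{J}(2m)})$, $\operatorname{Ker}(\Omega_A)$, $\operatorname{Ker}(\Omega_{(\ell)})$ admits an integral manifold through the origin.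
   Context: For a holomorphic one-form $\Omega$ on a complex manifold $V$, an integral manifold of $\operatorname{Ker}(\Omega)$ through a point $p$ is a germ at $p$ of an irreducible codimension one complex analytic subset $\Lambda$ such that, for a representative $\Lambda$ in a neighborhood of $p$, every tangent vector to the regular part $\Lambda^*=\Lambda\setminus\operatorname{sing}(\Lambda)$ lies in $\operatorname{Ker}(\Omega)$, i.e. $T\Lambda^*\subset\operatorname{Ker}(\Omega)|_{\Lambda^*}$ (singular points of $\Lambda$ need not be zeros of $\Omega$). $\mathbb{N}$ denotes the positive integers. *)

theory Defs
  imports "HOL-Analysis.Analysis"
begin

text \<open>Points of C^N are vectors of type complex^'k (N = CARD('k)).
A holomorphic one-form is represented by its value Om p v = Omega_p(v)
(complex linear in v).\<close>

definition cscale :: "complex \<Rightarrow> complex^'k \<Rightarrow> complex^'k" where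
  "cscale c v = (\<chi> i. c * v $ i)"

definition cderiv_at :: "(complex^'k \<Rightarrow> complex) \<Rightarrow> (complex^'k \<Rightarrow> complex) \<Rightarrow> complex^'k \<Rightarrow> bool" where
  "cderiv_at f L p \<longleftrightarrow> (f has_derivative L) (at p) \<and> (\<forall>c v. L (cscale c v) = c * L v)"

definition holo_on :: "(complex^'k \<Rightarrow> complex) \<Rightarrow> (complex^'k) set \<Rightarrow> bool" where
  "holo_on f U \<longleftrightarrow> open U \<and> (\<forall>p\<in>U. \<exists>L. cderiv_at f L p)"

definition analytic_subset :: "(complex^'k) set \<Rightarrow> (complex^'k) set \<Rightarrow> bool" where
  "analytic_subset L U \<longleftrightarrow> open U \<and> L \<subseteq> U \<and> closedin (top_of_set U) L \<and>
     (\<forall>p\<in>U. \<exists>W (k::nat) g. open W \<and> p \<in> W \<and> W \<subseteq> U \<and> (\<forall>i<k. holo_on (g i) W) \<and>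
        L \<inter> W = {z\<in>W. \<forall>i<k. g i z = 0})"

text \<open>Local presentation of L near q as a complex submanifold of complex dimension d:
L \<inter> W is the common zero set of N-d holomorphic functions on W whose differentials are
complex linearly independent at every point of W.\<close>
definition regular_presentation ::
  "(complex^'k) set \<Rightarrow> complex^'k \<Rightarrow> nat \<Rightarrow> (complex^'k) set \<Rightarrow> (nat \<Rightarrow> complex^'k \<Rightarrow> complex) \<Rightarrow> bool" where
  "regular_presentation L q d W g \<longleftrightarrow> q \<in> L \<and> d \<le> CARD('k) \<and> open W \<and> q \<in> W \<and>
     (\<forall>i<CARD('k) - d. holo_on (g i) W) \<and>
     L \<inter> W = {z\<in>W. \<forall>i<CARD('k) - d. g i z = 0} \<and>
     (\<forall>z\<in>W. \<exists>D. (\<forall>i<CARD('k) - d. cderiv_at (g i) (D i) z) \<and>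
        (\<forall>c. (\<forall>v. (\<Sum>i<CARD('k) - d. c i * D i v) = 0) \<longrightarrow> (\<forall>i<CARD('k) - d. c i = 0)))"

definition regular_dim :: "(complex^'k) set \<Rightarrow> complex^'k \<Rightarrow> nat \<Rightarrow> bool" where
  "regular_dim L q d \<longleftrightarrow> (\<exists>W g. regular_presentation L q d W g)"

definition regular_pt :: "(complex^'k) set \<Rightarrow> complex^'k \<Rightarrow> bool" where
  "regular_pt L q \<longleftrightarrow> (\<exists>d. regular_dim L q d)"

text \<open>Tangent space at a regular point q = common kernel of the differentials of the
defining functions; it is required to lie in Ker(Om_q).\<close>
definition tangent_in_kernel ::
  "(complex^'k \<Rightarrow> complex^'k \<Rightarrow> complex) \<Rightarrow> (complex^'k) set \<Rightarrow> complex^'k \<Rightarrow> bool" where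
  "tangent_in_kernel Om L q \<longleftrightarrow>
     (\<forall>d W g D. regular_presentation L q d W g \<and> (\<forall>i<CARD('k) - d. cderiv_at (g i) (D i) q) \<longrightarrow>
        (\<forall>v. (\<forall>i<CARD('k) - d. D i v = 0) \<longrightarrow> Om q v = 0))"

definition germ_eq :: "complex^'k \<Rightarrow> (complex^'k) set \<Rightarrow> (complex^'k) set \<Rightarrow> bool" where
  "germ_eq p A B \<longleftrightarrow> (\<exists>W. open W \<and> p \<in> W \<and> A \<inter> W = B \<inter> W)"

definition irreducible_germ :: "(complex^'k) set \<Rightarrow> (complex^'k) set \<Rightarrow> complex^'k \<Rightarrow> bool" where
  "irreducible_germ L U p \<longleftrightarrow> p \<in> L \<and>
     \<not> (\<exists>W L1 L2. open W \<and> p \<in> W \<and> W \<subseteq> U \<and> analytic_subset L1 W \<and> analytic_subset L2 W \<and>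
          L \<inter> W = L1 \<union> L2 \<and> \<not> germ_eq p L1 L \<and> \<not> germ_eq p L2 L)"

text \<open>Dimension of the germ at p: maximal dimension of regular points near p.\<close>
definition germ_dim :: "(complex^'k) set \<Rightarrow> complex^'k \<Rightarrow> nat \<Rightarrow> bool" where
  "germ_dim L p d \<longleftrightarrow>
     (\<exists>W. open W \<and> p \<in> W \<and> (\<forall>q\<in>W. \<forall>e. regular_dim L q e \<longrightarrow> e \<le> d)) \<and>
     (\<forall>W. open W \<and> p \<in> W \<longrightarrow> (\<exists>q\<in>W. regular_dim L q d))"

text \<open>L (a representative in the open neighbourhood U of p) is an integral manifold
of Ker(Om) through p.\<close>
definition integral_manifold ::
  "(complex^'k \<Rightarrow> complex^'k \<Rightarrow> complex) \<Rightarrow> complex^'k \<Rightarrow> (complex^'k) set \<Rightarrow> (complex^'k) set \<Rightarrow> bool" where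
  "integral_manifold Om p U L \<longleftrightarrow> open U \<and> p \<in> U \<and> analytic_subset L U \<and>
     irreducible_germ L U p \<and> germ_dim L p (CARD('k) - 1) \<and>
     (\<forall>q\<in>L. regular_pt L q \<longrightarrow> tangent_in_kernel Om L q)"

definition has_integral_manifold :: "(complex^'k \<Rightarrow> complex^'k \<Rightarrow> complex) \<Rightarrow> complex^'k \<Rightarrow> bool" where
  "has_integral_manifold Om p \<longleftrightarrow> (\<exists>U L. integral_manifold Om p U L)"

text \<open>Coordinates on C^{2m}: index (j, False) is z_{2j-1}, index (j, True) is z_{2j}.\<close>
definition Omega_J :: "complex^('m::finite \<times> bool) \<Rightarrow> complex^('m \<times> bool) \<Rightarrow> complex" where
  "Omega_J z v = (\<Sum>j\<in>UNIV. z $ (j, False) * v $ (j, True) - z $ (j, True) * v $ (j, False))"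

definition Omega_A :: "complex^'n^'n \<Rightarrow> complex^'n \<Rightarrow> complex^'n \<Rightarrow> complex" where
  "Omega_A A z v = (\<Sum>i\<in>UNIV. \<Sum>j\<in>UNIV. A $ i $ j * z $ i * v $ j)"

definition Omega_l :: "('m::finite \<Rightarrow> nat) \<Rightarrow> complex^('m \<times> bool) \<Rightarrow> complex^('m \<times> bool) \<Rightarrow> complex" where
  "Omega_l l z v = (\<Sum>j\<in>UNIV. z $ (j, False) * v $ (j, True)
      - (of_nat (l j) * z $ (j, True) + z $ (j, False) ^ l j) * v $ (j, False))"

end

theory Submission
  imports Defs "HOL-Complex_Analysis.Cauchy_Integral_Formula"
begin

lemma norm_cscale: "norm (cscale c v) = cmod c * norm v"
  unfolding cscale_def norm_vec_def
  by (simp add: L2_set_right_distrib norm_mult)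

lemma cscale_add: "cscale (a + b) v = cscale a v + cscale b v"
  by (simp add: cscale_def vec_eq_iff algebra_simps)

lemma bounded_linear_cscale_left: "bounded_linear (\<lambda>c. cscale c (w::complex^'k))"
proof (rule bounded_linear_intro[where K="norm w"])
  show "cscale (x + y) w = cscale x w + cscale y w" for x y by (rule cscale_add)
  show "cscale (r *\<^sub>R x) w = r *\<^sub>R cscale x w" for r x
    by (simp add: cscale_def vec_eq_iff mult_scaleR_left)
  show "norm (cscale x w) \<le> norm x * norm w" for x by (simp add: norm_cscale)
qed

lemma cderiv_linear:
  assumes "cderiv_at f L p"
  shows "L h = (\<Sum>i\<in>UNIV. h $ i * L (axis i 1))"
proof -
  have bl: "bounded_linear L" using assms unfolding cderiv_at_def has_derivative_def by auto
  have hs: "h = (\<Sum>i\<in>UNIV. cscale (h $ i) (axis i 1))"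
    by (simp add: vec_eq_iff cscale_def axis_def sum_component if_distrib cong: if_cong)
  have "L h = (\<Sum>i\<in>UNIV. L (cscale (h $ i) (axis i 1)))"
    by (subst hs) (simp add: linear_sum[OF bounded_linear.linear[OF bl]])
  also have "\<dots> = (\<Sum>i\<in>UNIV. h $ i * L (axis i 1))"
    using assms unfolding cderiv_at_def by simp
  finally show ?thesis .
qed

definition bil :: "('k \<Rightarrow> 'k \<Rightarrow> complex) \<Rightarrow> complex^'k \<Rightarrow> complex^'k \<Rightarrow> complex" where
  "bil M x y = (\<Sum>i\<in>UNIV. \<Sum>k\<in>UNIV. M i k * x $ i * y $ k)"

lemma bil_alt: "bil M x y = (\<Sum>k\<in>UNIV. (\<Sum>i\<in>UNIV. M i k * x $ i) * y $ k)"
  unfolding bil_def by (subst sum.swap) (simp add: sum_distrib_right)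

lemma bil_add1: "bil M (a + b) y = bil M a y + bil M b y"
  by (simp add: bil_def algebra_simps sum.distrib)
lemma bil_diff1: "bil M (a - b) y = bil M a y - bil M b y"
  by (simp add: bil_def algebra_simps sum_subtractf)
lemma bil_add2: "bil M x (a + b) = bil M x a + bil M x b"
  by (simp add: bil_def algebra_simps sum.distrib)
lemma bil_diff2: "bil M x (a - b) = bil M x a - bil M x b"
  by (simp add: bil_def algebra_simps sum_subtractf)
lemma bil_scaleR1: "bil M (r *\<^sub>R a) y = of_real r * bil M a y"
  unfolding bil_def vector_scaleR_component by (simp add: scaleR_conv_of_real sum_distrib_left algebra_simps)
lemma bil_scaleR2: "bil M x (r *\<^sub>R a) = of_real r * bil M x a"
  unfolding bil_def vector_scaleR_component by (simp add: scaleR_conv_of_real sum_distrib_left algebra_simps)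
lemma bil_cscale2: "bil M x (cscale c a) = c * bil M x a"
  by (simp add: bil_def cscale_def algebra_simps sum_distrib_left)
lemma bil_cscale1: "bil M (cscale c a) y = c * bil M a y"
  by (simp add: bil_def cscale_def algebra_simps sum_distrib_left)

lemma bil_anti:
  assumes "\<forall>i k. M k i = - M i k"
  shows "bil M y x = - bil M x y"
proof -
  have "bil M y x = (\<Sum>i\<in>UNIV. \<Sum>k\<in>UNIV. M k i * y $ k * x $ i)"
    unfolding bil_def by (subst sum.swap) simp
  also have "\<dots> = (\<Sum>i\<in>UNIV. \<Sum>k\<in>UNIV. - (M i k * x $ i * y $ k))"
  proof (intro sum.cong refl)
    fix i k
    have "M k i = - M i k" using assms by blast
    then show "M k i * y $ k * x $ i = - (M i k * x $ i * y $ k)" by simp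
  qed
  also have "\<dots> = - bil M x y"
    unfolding bil_def by (simp add: sum_negf)
  finally show ?thesis .
qed

lemma bil_self:
  assumes "\<forall>i k. M k i = - M i k"
  shows "bil M x x = 0"
  using bil_anti[OF assms, of x x] by simp

lemma bil_bound: "cmod (bil M x y) \<le> (\<Sum>i\<in>UNIV. \<Sum>k\<in>UNIV. cmod (M i k)) * norm x * norm y"
proof -
  have "cmod (bil M x y) \<le> (\<Sum>i\<in>UNIV. \<Sum>k\<in>UNIV. cmod (M i k * x $ i * y $ k))"
    unfolding bil_def by (rule order_trans[OF norm_sum sum_mono]) (rule norm_sum)
  also have "\<dots> \<le> (\<Sum>i\<in>UNIV. \<Sum>k\<in>UNIV. cmod (M i k) * norm x * norm y)"
    by (intro sum_mono) (auto simp: norm_mult intro!: mult_mono mult_nonneg_nonneg Finite_Cartesian_Product.norm_nth_le)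
  also have "\<dots> = (\<Sum>i\<in>UNIV. \<Sum>k\<in>UNIV. cmod (M i k)) * norm x * norm y"
    by (simp add: sum_distrib_right)
  finally show ?thesis .
qed

lemma bil_has_derivative2: "((\<lambda>y. bil M x y) has_derivative (\<lambda>h. bil M x h)) F"
  unfolding bil_def by (auto intro!: derivative_eq_intros bounded_linear.has_derivative[OF bounded_linear_vec_nth])

lemma bounded_linear_bil2: "bounded_linear (\<lambda>y. bil M x y)"
  using bil_has_derivative2[of M x "at 0"] unfolding has_derivative_def by auto

lemma three_distinct:
  fixes i0 :: "'k::finite"
  assumes "CARD('k) \<ge> 3"
  obtains i1 i2 :: 'k where "i1 \<noteq> i0" "i2 \<noteq> i0" "i1 \<noteq> i2"
proof -
  have "\<not> (UNIV \<subseteq> {i0, i1})" for i1 :: 'k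
  proof
    assume "UNIV \<subseteq> {i0, i1}"
    then have "CARD('k) \<le> card {i0, i1}" by (intro card_mono) auto
    also have "\<dots> \<le> 2" by (simp add: card_insert_le_m1)
    finally show False using assms by simp
  qed
  then have "\<exists>i1 i2. i1 \<noteq> i0 \<and> i2 \<noteq> i0 \<and> i2 \<noteq> i1"
    by (metis (full_types) insertCI subsetI)
  then show ?thesis using that by blast
qed

lemma exists_noniso:
  fixes M :: "'k::finite \<Rightarrow> 'k \<Rightarrow> complex" and p :: "'k \<Rightarrow> complex"
  assumes card: "CARD('k) \<ge> 3"
    and nondeg: "\<forall>x::complex^'k. (\<forall>k. (\<Sum>i\<in>UNIV. M i k * x$i) = 0) \<longrightarrow> x = 0"
    and p: "p i0 \<noteq> 0"
  shows "\<exists>u v::complex^'k. (\<Sum>i\<in>UNIV. p i * u$i) = 0 \<and> (\<Sum>i\<in>UNIV. p i * v$i) = 0 \<and> bil M u v \<noteq> 0"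
proof (rule ccontr)
  assume H: "\<not> ?thesis"
  obtain i1 i2 :: 'k where i: "i1 \<noteq> i0" "i2 \<noteq> i0" "i1 \<noteq> i2"
    using three_distinct[OF card] by blast
  define Y where "Y u k = (\<Sum>i\<in>UNIV. M i k * u$i)" for u :: "complex^'k" and k
  define kv where "kv k = (\<chi> j. (if j = k then p i0 else 0) - (if j = i0 then p k else 0))" for k
  have kvs: "f j * kv k $ j = (if j = k then f k * p i0 else 0) - (if j = i0 then f i0 * p k else 0)" for f j k
    by (simp add: kv_def right_diff_distrib)
  have kvker: "(\<Sum>j\<in>UNIV. p j * kv k $ j) = 0" for k
    unfolding kvs by (simp add: sum_subtractf)
  have bilkv: "bil M u (kv k) = Y u k * p i0 - Y u i0 * p k" for u k
    unfolding bil_alt Y_def[symmetric] kvs[of "Y u"] by (simp add: sum_subtractf)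
  have Yrel: "Y u k * p i0 = Y u i0 * p k" if "(\<Sum>j\<in>UNIV. p j * u $ j) = 0" for u k
    using H that kvker[of k] bilkv[of u k] by auto
  define lam where "lam u = Y u i0 / p i0" for u
  have Yl: "Y u k = lam u * p k" if "(\<Sum>j\<in>UNIV. p j * u $ j) = 0" for u k
    using Yrel[OF that, of k] p by (simp add: lam_def field_simps)
  have Ydiff: "Y (a - b) k = Y a k - Y b k" for a b k
    by (simp add: Y_def right_diff_distrib sum_subtractf)
  have Ysc: "Y (cscale c a) k = c * Y a k" for a c k
    by (simp add: Y_def cscale_def sum_distrib_left algebra_simps)
  define x where "x = cscale (lam (kv i2)) (kv i1) - cscale (lam (kv i1)) (kv i2)"
  have "Y x k = 0" for k
    unfolding x_def Ydiff Ysc Yl[OF kvker] by simp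
  then have x0: "x = 0" using nondeg unfolding Y_def by blast
  have "x $ i1 = lam (kv i2) * p i0" using i by (simp add: x_def cscale_def kv_def)
  then have l2: "lam (kv i2) = 0" using x0 p by simp
  have "x $ i2 = - lam (kv i1) * p i0" using i by (simp add: x_def cscale_def kv_def)
  then have l1: "lam (kv i1) = 0" using x0 p by simp
  have "Y (kv i1) k = 0" for k using Yl[OF kvker] l1 by simp
  then have "kv i1 = 0" using nondeg unfolding Y_def by blast
  then have "kv i1 $ i1 = 0" by simp
  then show False using i p by (simp add: kv_def)
qed

lemma cscale_zero[simp]: "cscale 0 h = 0"
  by (simp add: cscale_def vec_eq_iff)

lemma line_field_deriv:
  assumes "cderiv_at g L (z + cscale \<zeta> h)"
  shows "((\<lambda>\<zeta>. g (z + cscale \<zeta> h)) has_field_derivative L h) (at \<zeta>)"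
proof -
  have d1: "((\<lambda>\<zeta>. z + cscale \<zeta> h) has_derivative (\<lambda>t. cscale t h)) (at \<zeta>)"
    by (auto intro!: derivative_eq_intros bounded_linear.has_derivative[OF bounded_linear_cscale_left])
  have d2: "(g has_derivative L) (at (z + cscale \<zeta> h))"
    using assms unfolding cderiv_at_def by auto
  have "((g \<circ> (\<lambda>\<zeta>. z + cscale \<zeta> h)) has_derivative (L \<circ> (\<lambda>t. cscale t h))) (at \<zeta>)"
    by (rule diff_chain_at[OF d1 d2])
  moreover have "L \<circ> (\<lambda>t. cscale t h) = (*) (L h)"
    using assms unfolding cderiv_at_def by (auto simp: fun_eq_iff mult.commute)
  ultimately show ?thesis unfolding has_field_derivative_def by (simp add: o_def)
qed

lemma G_cont:
  fixes g :: "complex^'k::finite \<Rightarrow> complex"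
  assumes W: "open W" and der: "\<forall>z\<in>W. cderiv_at g (G z) z" and z0: "z0 \<in> W"
  shows "continuous (at z0) (\<lambda>z. G z h)"
proof -
  obtain r where r: "r > 0" "cball z0 (2*r) \<subseteq> W"
    using W z0 open_contains_cball by (metis field_sum_of_halves half_gt_zero_iff mult_2)
  define \<rho> where "\<rho> = r / (norm h + 1)"
  have hp: "norm h + 1 > 0" by (simp add: add_nonneg_pos)
  have \<rho>: "\<rho> > 0" using r hp unfolding \<rho>_def by (intro divide_pos_pos)
  have \<rho>h: "\<rho> * norm h < r"
  proof -
    have "\<rho> * norm h < \<rho> * (norm h + 1)" using \<rho> by simp
    also have "\<dots> = r" using hp by (simp add: \<rho>_def)
    finally show ?thesis .
  qed
  have contg: "continuous_on (cball z0 (2*r)) g"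
  proof (rule continuous_at_imp_continuous_on, rule ballI)
    fix x assume "x \<in> cball z0 (2*r)"
    then have "x \<in> W" using r by auto
    then show "isCont g x" using der unfolding cderiv_at_def
      by (meson has_derivative_continuous)
  qed
  have uc: "uniformly_continuous_on (cball z0 (2*r)) g"
    by (rule compact_uniformly_continuous[OF contg compact_cball])
  show ?thesis
    unfolding continuous_at_eps_delta
  proof (intro allI impI)
    fix e :: real assume e: "e > 0"
    obtain d where d: "d > 0" "\<forall>x\<in>cball z0 (2*r). \<forall>x'\<in>cball z0 (2*r). dist x' x < d \<longrightarrow> dist (g x') (g x) < e * \<rho> / 2"
      using uc e \<rho> unfolding uniformly_continuous_on_def by (metis half_gt_zero mult_pos_pos)
    show "\<exists>\<delta>>0. \<forall>x'. dist x' z0 < \<delta> \<longrightarrow> dist (G x' h) (G z0 h) < e"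
    proof (intro exI[of _ "min d r"] conjI allI impI)
      show "min d r > 0" using d r by simp
      fix z assume dz: "dist z z0 < min d r"
      have inK: "y + cscale \<zeta> h \<in> cball z0 (2*r)" if "dist y z0 \<le> r" "cmod \<zeta> \<le> \<rho>" for y \<zeta>
      proof -
        have "dist (y + cscale \<zeta> h) z0 \<le> dist y z0 + norm (cscale \<zeta> h)"
          by (metis dist_norm dist_triangle2 add_diff_cancel_left' norm_minus_commute)
        also have "norm (cscale \<zeta> h) \<le> \<rho> * norm h"
          unfolding norm_cscale using that by (simp add: mult_right_mono)
        finally show ?thesis using that \<rho>h by (simp add: dist_commute)
      qed
      have hd: "((\<lambda>\<zeta>. g (y + cscale \<zeta> h)) has_field_derivative G (y + cscale \<zeta> h) h) (at \<zeta>)"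
        if "dist y z0 \<le> r" "cmod \<zeta> \<le> \<rho>" for y \<zeta>
        using inK[OF that] r der line_field_deriv by blast
      define f where "f \<zeta> = g (z + cscale \<zeta> h) - g (z0 + cscale \<zeta> h)" for \<zeta>
      have zr: "dist z z0 \<le> r" using dz by simp
      have z0r: "dist z0 z0 \<le> r" using r by simp
      have fd: "(f has_field_derivative G (z + cscale \<zeta> h) h - G (z0 + cscale \<zeta> h) h) (at \<zeta>)"
        if "cmod \<zeta> \<le> \<rho>" for \<zeta>
        unfolding f_def by (intro DERIV_diff hd zr z0r that)
      have holf: "f holomorphic_on ball 0 \<rho>"
        unfolding holomorphic_on_def using fd
        by (metis field_differentiable_at_within field_differentiable_def less_eq_real_def mem_ball_0)
      have contf: "continuous_on (cball 0 \<rho>) f"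
      proof (rule continuous_at_imp_continuous_on, rule ballI)
        fix x :: complex assume "x \<in> cball 0 \<rho>"
        then have "cmod x \<le> \<rho>" by simp
        then show "isCont f x" using fd DERIV_isCont by blast
      qed
      have bnd: "norm (f x) \<le> e * \<rho> / 2" if "norm (0 - x) = \<rho>" for x
      proof -
        have "cmod x \<le> \<rho>" using that by simp
        then have "dist (z + cscale x h) (z0 + cscale x h) < d"
          "z + cscale x h \<in> cball z0 (2*r)" "z0 + cscale x h \<in> cball z0 (2*r)"
          using dz inK[OF zr] inK[OF z0r] by (auto simp: dist_norm)
        then show ?thesis using d(2) unfolding f_def dist_norm by fastforce
      qed
      have "norm ((deriv ^^ 1) f 0) \<le> fact 1 * (e * \<rho> / 2) / \<rho> ^ 1"
        by (rule Cauchy_inequality[OF holf contf \<rho> bnd])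
      moreover have "deriv f 0 = G z h - G z0 h"
        using fd[of 0] \<rho> by (simp add: DERIV_imp_deriv)
      ultimately have "norm (G z h - G z0 h) \<le> e / 2" using \<rho> by simp
      then show "dist (G z h) (G z0 h) < e" using e by (simp add: dist_norm)
    qed
  qed
qed

lemma G_opcont:
  fixes g :: "complex^'k::finite \<Rightarrow> complex"
  assumes W: "open W" and der: "\<forall>z\<in>W. cderiv_at g (G z) z" and z0: "z0 \<in> W" and e: "\<epsilon> > 0"
  shows "\<exists>\<delta>>0. ball z0 \<delta> \<subseteq> W \<and> (\<forall>z\<in>ball z0 \<delta>. \<forall>h. cmod (G z h - G z0 h) \<le> \<epsilon> * norm h)"
proof -
  define e' where "e' = \<epsilon> / real CARD('k)"
  have e': "e' > 0" using e by (simp add: e'_def)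
  have "\<forall>\<^sub>F z in at z0. dist (G z (axis i 1)) (G z0 (axis i 1)) < e'" for i
    using G_cont[OF W der z0, of "axis i 1"] e' unfolding continuous_at tendsto_iff by blast
  then have "\<forall>\<^sub>F z in at z0. \<forall>i. dist (G z (axis i 1)) (G z0 (axis i 1)) < e'"
    by (rule eventually_all_finite)
  then obtain d where d: "d > 0" "\<forall>z. z \<noteq> z0 \<and> dist z z0 < d \<longrightarrow> (\<forall>i. dist (G z (axis i 1)) (G z0 (axis i 1)) < e')"
    unfolding eventually_at by blast
  obtain r where r: "r > 0" "ball z0 r \<subseteq> W" using W z0 open_contains_ball by blast
  show ?thesis
  proof (intro exI[of _ "min d r"] conjI ballI allI)
    show "min d r > 0" using d r by simp
    show "ball z0 (min d r) \<subseteq> W" using r by auto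
    fix z h assume z: "z \<in> ball z0 (min d r)"
    then have zW: "z \<in> W" using r by auto
    have bnd: "dist (G z (axis i 1)) (G z0 (axis i 1)) \<le> e'" for i
    proof (cases "z = z0")
      case True then show ?thesis using e' by simp
    next
      case False
      then have "dist z z0 < d" using z by (simp add: dist_commute)
      then show ?thesis using d(2) False less_imp_le by blast
    qed
    have "G z h - G z0 h = (\<Sum>i\<in>UNIV. h $ i * (G z (axis i 1) - G z0 (axis i 1)))"
      using cderiv_linear[of g "G z" z h] cderiv_linear[of g "G z0" z0 h] der zW z0
      by (simp add: right_diff_distrib sum_subtractf)
    also have "cmod \<dots> \<le> (\<Sum>i\<in>UNIV. cmod (h $ i * (G z (axis i 1) - G z0 (axis i 1))))"
      by (rule norm_sum)
    also have "\<dots> \<le> (\<Sum>i\<in>(UNIV::'k set). norm h * e')"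
      by (intro sum_mono)
        (use bnd in \<open>auto simp: norm_mult dist_norm intro!: mult_mono Finite_Cartesian_Product.norm_nth_le\<close>)
    also have "\<dots> = \<epsilon> * norm h" by (simp add: e'_def)
    finally show "cmod (G z h - G z0 h) \<le> \<epsilon> * norm h" .
  qed
qed

lemma cderiv_props:
  assumes "cderiv_at f L p"
  shows "bounded_linear L" "L (a + b) = L a + L b" "L (a - b) = L a - L b"
    "L (r *\<^sub>R a) = of_real r * L a" "L (cscale c a) = c * L a" "L 0 = 0"
proof -
  show bl: "bounded_linear L" using assms unfolding cderiv_at_def has_derivative_def by auto
  show "L (a + b) = L a + L b" using bl by (simp add: linear_add bounded_linear.linear)
  show "L (a - b) = L a - L b" using bl by (simp add: linear_diff bounded_linear.linear)
  have "L (r *\<^sub>R a) = r *\<^sub>R L a" using bl by (simp add: linear_scale bounded_linear.linear)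
  also have "r *\<^sub>R L a = of_real r * L a" by (rule scaleR_conv_of_real)
  finally show "L (r *\<^sub>R a) = of_real r * L a" .
  show "L (cscale c a) = c * L a" using assms unfolding cderiv_at_def by auto
  show "L 0 = 0" using bl by (simp add: linear_0 bounded_linear.linear)
qed

lemma choose_eps:
  fixes Kb Bb nw R :: real
  assumes "Kb > 0" "Bb > 0" "nw \<ge> 0" "R \<ge> 0"
  shows "\<exists>\<epsilon>>0. \<epsilon> * nw \<le> 1/2 \<and> 6 * Kb * R * R * \<epsilon> * nw < Bb"
proof -
  define A where "A = 6 * Kb * R * R * nw"
  have A: "A \<ge> 0" using assms by (simp add: A_def)
  define e1 where "e1 = 1 / (2 * nw + 1)"
  define e2 where "e2 = Bb / (A + 1) / 2"
  have e1: "e1 > 0" "e1 * nw \<le> 1/2" using assms by (auto simp: e1_def field_simps)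
  have A1: "A + 1 > 0" using A by simp
  have e2p: "e2 > 0" unfolding e2_def using assms A1 by simp
  have "A / (A + 1) \<le> 1" using A1 by simp
  moreover have "A * e2 = A / (A + 1) * (Bb / 2)" by (simp add: e2_def)
  ultimately have "A * e2 \<le> 1 * (Bb / 2)" using assms by (metis mult_right_mono half_gt_zero less_eq_real_def)
  then have e2: "e2 > 0" "A * e2 < Bb" using e2p assms by auto
  define \<epsilon> where "\<epsilon> = min e1 e2"
  have "\<epsilon> > 0" using e1 e2 by (simp add: \<epsilon>_def)
  moreover have "\<epsilon> * nw \<le> 1/2"
    using e1 assms by (metis \<epsilon>_def min.cobounded1 mult_right_mono order_trans)
  moreover have "A * \<epsilon> < Bb"
    using e2 A by (metis \<epsilon>_def min.cobounded2 mult_left_mono order_le_less_trans)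
  ultimately show ?thesis unfolding A_def by (metis mult.commute mult.left_commute)
qed

lemma core:
  fixes g :: "complex^'k::finite \<Rightarrow> complex" and Om :: "complex^'k \<Rightarrow> complex^'k \<Rightarrow> complex"
    and M :: "'k \<Rightarrow> 'k \<Rightarrow> complex" and P :: "complex^'k \<Rightarrow> complex"
  assumes card: "CARD('k) \<ge> 3"
    and anti: "\<forall>i k. M k i = - M i k"
    and nondeg: "\<forall>x::complex^'k. (\<forall>k. (\<Sum>i\<in>UNIV. M i k * x$i) = 0) \<longrightarrow> x = 0"
    and derP: "\<forall>z. (P has_derivative (\<lambda>w. Om z w - bil M z w)) (at z)"
    and W: "open W" and qW: "q \<in> W" and gq: "g q = 0"
    and der: "\<forall>z\<in>W. cderiv_at g (G z) z"
    and nz: "G q h0 \<noteq> 0"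
    and tang: "\<forall>z\<in>W. g z = 0 \<longrightarrow> (\<forall>v. G z v = 0 \<longrightarrow> Om z v = 0)"
  shows False
proof -
  note Gp = cderiv_props[OF bspec[OF der]]
  define p where "p i = G q (axis i 1)" for i
  have Gq: "G q h = (\<Sum>i\<in>UNIV. p i * h $ i)" for h
    using cderiv_linear[of g "G q" q h] der qW by (simp add: p_def mult.commute)
  have "\<exists>i0. p i0 \<noteq> 0"
  proof (rule ccontr)
    assume "\<not> ?thesis"
    then have "G q h0 = 0" unfolding Gq by simp
    with nz show False by simp
  qed
  then obtain i0 where i0: "p i0 \<noteq> 0" by blast
  obtain u v where uv: "G q u = 0" "G q v = 0" "bil M u v \<noteq> 0"
    using exists_noniso[of M p i0, OF card nondeg i0] unfolding Gq[symmetric] by blast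
  define w where "w = cscale (1 / G q h0) h0"
  have Gw: "G q w = 1" using nz Gp(5)[OF qW] by (simp add: w_def)
  define Kb where "Kb = (\<Sum>i\<in>UNIV. \<Sum>k\<in>UNIV. cmod (M i k)) + 1"
  have Kb: "Kb > 0" unfolding Kb_def by (simp add: add_nonneg_pos sum_nonneg)
  have bilb: "cmod (bil M x y) \<le> Kb * norm x * norm y" for x y
  proof -
    have "cmod (bil M x y) \<le> (\<Sum>i\<in>UNIV. \<Sum>k\<in>UNIV. cmod (M i k)) * norm x * norm y"
      by (rule bil_bound)
    also have "\<dots> \<le> Kb * norm x * norm y"
      unfolding Kb_def by (intro mult_right_mono) auto
    finally show ?thesis .
  qed
  define R where "R = norm u + norm v"
  define Bb where "Bb = cmod (bil M u v)"
  define nw where "nw = norm w"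
  have R: "R \<ge> 0" by (simp add: R_def)
  have Bb: "Bb > 0" using uv by (simp add: Bb_def)
  have nw: "nw \<ge> 0" by (simp add: nw_def)
  obtain \<epsilon> where eps: "\<epsilon> > 0" "\<epsilon> * nw \<le> 1/2" "6 * Kb * R * R * \<epsilon> * nw < Bb"
    using choose_eps[OF Kb Bb nw R] by blast
  obtain \<delta>1 where d1: "\<delta>1 > 0" "ball q \<delta>1 \<subseteq> W" "\<forall>z\<in>ball q \<delta>1. \<forall>h. cmod (G z h - G q h) \<le> \<epsilon> * norm h"
    using G_opcont[OF W der qW eps(1)] by blast
  obtain \<delta>2 where d2: "\<delta>2 > 0" "\<forall>y. norm (y - q) < \<delta>2 \<longrightarrow> cmod (g y - g q - G q (y - q)) \<le> \<epsilon> * norm (y - q)"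
    using der qW eps(1) unfolding cderiv_at_def has_derivative_at_alt by blast
  define \<delta> where "\<delta> = min \<delta>1 \<delta>2"
  define U where "U = ball q \<delta>"
  have UW: "U \<subseteq> W" using d1 by (auto simp: U_def \<delta>_def)
  have Ub1: "\<forall>z\<in>U. \<forall>h. cmod (G z h - G q h) \<le> \<epsilon> * norm h"
    using d1 by (auto simp: U_def \<delta>_def)
  have Ub2: "\<forall>z\<in>U. cmod (g z - G q (z - q)) \<le> \<epsilon> * norm (z - q)"
    using d2 gq by (auto simp: U_def \<delta>_def dist_norm norm_minus_commute)
  define F where "F z = z + cscale (g z - G q (z - q)) w" for z
  define F0 where "F0 z = (\<lambda>h. h + cscale (G z h - G q h) w)" for z
  define F' where "F' z = Blinfun (F0 z)" for z
  have blF0: "bounded_linear (F0 z)" if "z \<in> W" for z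
  proof -
    have "bounded_linear (\<lambda>h. G z h - G q h)"
      using Gp(1)[OF that] Gp(1)[OF qW] by (intro bounded_linear_sub)
    then have "bounded_linear (\<lambda>h. cscale (G z h - G q h) w)"
      using bounded_linear_compose[OF bounded_linear_cscale_left] by blast
    then show ?thesis unfolding F0_def by (intro bounded_linear_add bounded_linear_ident)
  qed
  have F'app: "blinfun_apply (F' z) = F0 z" if "z \<in> W" for z
    unfolding F'_def using blF0[OF that] by (rule bounded_linear_Blinfun_apply)
  have Fder: "(F has_derivative blinfun_apply (F' z)) (at z)" if "z \<in> W" for z
  proof -
    have dg: "(g has_derivative G z) (at z)" using der that unfolding cderiv_at_def by auto
    have dl: "((\<lambda>z. G q (z - q)) has_derivative (\<lambda>h. G q h)) (at z)"
    proof -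
      have "((\<lambda>z. z - q) has_derivative (\<lambda>h. h)) (at z)"
        by (intro derivative_eq_intros) auto
      then show ?thesis by (rule bounded_linear.has_derivative[OF Gp(1)[OF qW]])
    qed
    have "((\<lambda>z. g z - G q (z - q)) has_derivative (\<lambda>h. G z h - G q h)) (at z)"
      by (intro has_derivative_diff dg dl)
    then have "((\<lambda>z. cscale (g z - G q (z - q)) w) has_derivative (\<lambda>h. cscale (G z h - G q h) w)) (at z)"
      by (rule bounded_linear.has_derivative[OF bounded_linear_cscale_left])
    then have "(F has_derivative F0 z) (at z)"
      unfolding F_def F0_def by (intro has_derivative_add has_derivative_ident)
    then show ?thesis using F'app[OF that] by simp
  qed
  have contF': "continuous_on U F'"
    unfolding continuous_on_iff
  proof (intro ballI allI impI)
    fix z0 e assume z0: "z0 \<in> U" and e: "(0::real) < e"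
    have z0W: "z0 \<in> W" using z0 UW by auto
    define e' where "e' = e / 2 / (nw + 1)"
    have e': "e' > 0" using e nw by (simp add: e'_def add_nonneg_pos)
    obtain d where d: "d > 0" "ball z0 d \<subseteq> W" "\<forall>z\<in>ball z0 d. \<forall>h. cmod (G z h - G z0 h) \<le> e' * norm h"
      using G_opcont[OF W der z0W e'] by blast
    show "\<exists>d>0. \<forall>x'\<in>U. dist x' z0 < d \<longrightarrow> dist (F' x') (F' z0) < e"
    proof (intro exI[of _ d] conjI ballI impI)
      show "d > 0" by fact
      fix z assume zU: "z \<in> U" and dz: "dist z z0 < d"
      have zW: "z \<in> W" using zU UW by auto
      have "norm (F' z - F' z0) \<le> e' * nw"
      proof (rule norm_blinfun_bound)
        show "0 \<le> e' * nw" using e' nw by simp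
        fix h
        have "blinfun_apply (F' z - F' z0) h = cscale (G z h - G z0 h) w"
          using F'app[OF zW] F'app[OF z0W]
          by (simp add: blinfun.diff_left F0_def cscale_def vec_eq_iff algebra_simps)
        also have "norm \<dots> \<le> e' * norm h * nw"
          unfolding norm_cscale nw_def
          using d(3) dz by (intro mult_right_mono) (auto simp: dist_commute)
        finally show "norm (blinfun_apply (F' z - F' z0) h) \<le> e' * nw * norm h"
          by (simp add: algebra_simps)
      qed
      also have "e' * nw < e"
      proof -
        have "e' * nw \<le> e' * (nw + 1)" using e' by simp
        also have "\<dots> = e / 2"
        proof -
          have nw1: "nw + 1 \<noteq> 0" using nw by simp
          show ?thesis unfolding e'_def using nw1 by (simp add: field_simps)
        qed
        finally show ?thesis using e by simp
      qed
      finally show "dist (F' z) (F' z0) < e" by (simp add: dist_norm)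
    qed
  qed
  have qU: "q \<in> U" using d1 d2 by (simp add: U_def \<delta>_def)
  have F'q: "id_blinfun o\<^sub>L F' q = id_blinfun"
    by (rule blinfun_eqI) (simp add: F'app[OF qW] F0_def)
  have oU: "open U" by (simp add: U_def)
  have Fder': "\<And>x. x \<in> U \<Longrightarrow> (F has_derivative blinfun_apply (F' x)) (at x)"
    using Fder UW by blast
  show False
  proof (rule inverse_function_theorem[OF oU Fder' contF' qU F'q])
    fix U' V Finv Finv'
    assume IFT: "open U'" "U' \<subseteq> U" "q \<in> U'" "open V" "F q \<in> V"
      "homeomorphism U' V F Finv" "\<And>y. y \<in> V \<Longrightarrow> (Finv has_derivative (Finv' y)) (at y)"
      "\<And>y. y \<in> V \<Longrightarrow> Finv' y = inv (blinfun_apply (F'(Finv y)))"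
      "\<And>y. y \<in> V \<Longrightarrow> bij (blinfun_apply (F'(Finv y)))"
    have Fq: "F q = q" using gq Gp(6)[OF qW] by (simp add: F_def)
    obtain r where r: "r > 0" "ball q r \<subseteq> V" using IFT(4,5) Fq open_contains_ball by metis
    have FFinv: "\<And>y. y \<in> V \<Longrightarrow> F (Finv y) = y" and FinvU: "\<And>y. y \<in> V \<Longrightarrow> Finv y \<in> U'"
      using IFT(6) unfolding homeomorphism_def by auto
    define s where "s = r / (2 * (R + 1))"
    have R1: "R + 1 > 0" using R by simp
    have s: "s > 0" using r R1 unfolding s_def by (intro divide_pos_pos) auto
    have sR: "s * R < r"
    proof -
      have "s * R \<le> s * (R + 1)" using s by simp
      also have "\<dots> = r / 2" using R1 unfolding s_def by (simp add: field_simps)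
      finally show ?thesis using r by simp
    qed
    define c where "c \<tau> = cos \<tau> *\<^sub>R u + sin \<tau> *\<^sub>R v" for \<tau> :: real
    define cp where "cp \<tau> = (- sin \<tau>) *\<^sub>R u + cos \<tau> *\<^sub>R v" for \<tau> :: real
    have cn: "norm (c \<tau>) \<le> R" for \<tau>
    proof -
      have "norm (c \<tau>) \<le> norm (cos \<tau> *\<^sub>R u) + norm (sin \<tau> *\<^sub>R v)"
        unfolding c_def by (rule norm_triangle_ineq)
      also have "\<dots> \<le> 1 * norm u + 1 * norm v"
      proof (rule add_mono)
        show "norm (cos \<tau> *\<^sub>R u) \<le> 1 * norm u" unfolding norm_scaleR by (rule mult_right_mono) auto
        show "norm (sin \<tau> *\<^sub>R v) \<le> 1 * norm v" unfolding norm_scaleR by (rule mult_right_mono) auto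
      qed
      finally show ?thesis by (simp add: R_def)
    qed
    have cpn: "norm (cp \<tau>) \<le> R" for \<tau>
    proof -
      have "norm (cp \<tau>) \<le> norm ((- sin \<tau>) *\<^sub>R u) + norm (cos \<tau> *\<^sub>R v)"
        unfolding cp_def by (rule norm_triangle_ineq)
      also have "\<dots> \<le> 1 * norm u + 1 * norm v"
      proof (rule add_mono)
        show "norm ((- sin \<tau>) *\<^sub>R u) \<le> 1 * norm u" unfolding norm_scaleR by (rule mult_right_mono) auto
        show "norm (cos \<tau> *\<^sub>R v) \<le> 1 * norm v" unfolding norm_scaleR by (rule mult_right_mono) auto
      qed
      finally show ?thesis by (simp add: R_def)
    qed
    have Gc: "G q (c \<tau>) = 0" "G q (cp \<tau>) = 0" for \<tau>
      using uv by (simp_all add: c_def cp_def Gp(2,3,4)[OF qW])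
    have bilc: "bil M (c \<tau>) (cp \<tau>) = bil M u v" for \<tau>
    proof -
      have sc: "(complex_of_real (sin \<tau>))^2 + (complex_of_real (cos \<tau>))^2 = 1"
        by (metis of_real_add of_real_power sin_cos_squared_add of_real_1)
      have "bil M (c \<tau>) (cp \<tau>) = (of_real (sin \<tau>))^2 * bil M u v + (of_real (cos \<tau>))^2 * bil M u v"
        unfolding c_def cp_def
        by (simp add: bil_add1 bil_add2 bil_diff2 bil_scaleR1 bil_scaleR2 bil_self[OF anti]
            bil_anti[OF anti, of v u] power2_eq_square algebra_simps)
      also have "\<dots> = bil M u v" using sc by (simp add: distrib_right[symmetric])
      finally show ?thesis .
    qed
    define y where "y \<tau> = q + s *\<^sub>R c \<tau>" for \<tau>
    have yV: "y \<tau> \<in> V" for \<tau>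
    proof -
      have "dist q (y \<tau>) = s * norm (c \<tau>)" using s by (simp add: y_def dist_norm)
      also have "\<dots> \<le> s * R" using s cn by (simp add: mult_left_mono)
      finally show ?thesis using sR r by auto
    qed
    define \<gamma> where "\<gamma> \<tau> = Finv (y \<tau>)" for \<tau>
    define d where "d \<tau> = Finv' (y \<tau>) (s *\<^sub>R cp \<tau>)" for \<tau>
    have yder: "(y has_vector_derivative s *\<^sub>R cp \<tau>) (at \<tau>)" for \<tau>
      unfolding y_def c_def cp_def has_vector_derivative_def
      by (auto intro!: derivative_eq_intros simp: algebra_simps)
    have \<gamma>der: "(\<gamma> has_vector_derivative d \<tau>) (at \<tau>)" for \<tau>
    proof -
      have "(Finv has_derivative Finv' (y \<tau>)) (at (y \<tau>) within range y)"
        by (rule has_derivative_at_withinI[OF IFT(7)[OF yV]])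
      from vector_derivative_diff_chain_within[OF yder this]
      have "((Finv \<circ> y) has_vector_derivative Finv' (y \<tau>) (s *\<^sub>R cp \<tau>)) (at \<tau>)" .
      moreover have "\<gamma> = (\<lambda>x. Finv (y x))" by (rule ext) (simp add: \<gamma>_def)
      ultimately show ?thesis by (simp add: d_def o_def)
    qed
    have \<gamma>U: "\<gamma> \<tau> \<in> U" for \<tau> using FinvU[OF yV] IFT(2) by (auto simp: \<gamma>_def)
    have \<gamma>W: "\<gamma> \<tau> \<in> W" for \<tau> using \<gamma>U UW by auto
    have F\<gamma>: "F (\<gamma> \<tau>) = y \<tau>" for \<tau> using FFinv[OF yV] by (simp add: \<gamma>_def)
    have key1: "d \<tau> + cscale (G (\<gamma> \<tau>) (d \<tau>) - G q (d \<tau>)) w = s *\<^sub>R cp \<tau>" for \<tau>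
    proof -
      have "(F has_derivative blinfun_apply (F' (\<gamma> \<tau>))) (at (\<gamma> \<tau>) within range \<gamma>)"
        by (rule has_derivative_at_withinI[OF Fder[OF \<gamma>W]])
      from vector_derivative_diff_chain_within[OF \<gamma>der this]
      have "((F \<circ> \<gamma>) has_vector_derivative blinfun_apply (F' (\<gamma> \<tau>)) (d \<tau>)) (at \<tau>)" .
      moreover have "F \<circ> \<gamma> = y" using F\<gamma> by (simp add: fun_eq_iff)
      ultimately have "blinfun_apply (F' (\<gamma> \<tau>)) (d \<tau>) = s *\<^sub>R cp \<tau>"
        using yder vector_derivative_unique_at by metis
      then show ?thesis using F'app[OF \<gamma>W] by (simp add: F0_def)
    qed
    have key2: "(\<gamma> \<tau> - q) + cscale (g (\<gamma> \<tau>) - G q (\<gamma> \<tau> - q)) w = s *\<^sub>R c \<tau>" for \<tau>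
      using F\<gamma>[of \<tau>] unfolding F_def y_def by (simp add: algebra_simps)
    have Gqw: "G q (a + cscale x w) = G q a + x" for a x
      using Gw by (simp add: Gp(2,5)[OF qW])
    have Gzd: "G (\<gamma> \<tau>) (d \<tau>) = 0" for \<tau>
    proof -
      have "G q (d \<tau> + cscale (G (\<gamma> \<tau>) (d \<tau>) - G q (d \<tau>)) w) = G q (s *\<^sub>R cp \<tau>)"
        using key1 by simp
      then show ?thesis unfolding Gqw using Gc by (simp add: Gp(4)[OF qW])
    qed
    have g\<gamma>: "g (\<gamma> \<tau>) = 0" for \<tau>
    proof -
      have "G q ((\<gamma> \<tau> - q) + cscale (g (\<gamma> \<tau>) - G q (\<gamma> \<tau> - q)) w) = G q (s *\<^sub>R c \<tau>)"
        using key2 by simp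
      then show ?thesis unfolding Gqw using Gc by (simp add: Gp(4)[OF qW])
    qed
    have Om0: "Om (\<gamma> \<tau>) (d \<tau>) = 0" for \<tau>
      using tang \<gamma>W g\<gamma> Gzd by blast
    define B0 where "B0 = 6 * Kb * R * R * \<epsilon> * nw * (s * s)"
    have est: "cmod (bil M (\<gamma> \<tau> - q) (d \<tau>) - of_real (s * s) * bil M u v) \<le> B0" for \<tau>
    proof -
      define z where "z = \<gamma> \<tau>"
      have zU: "z \<in> U" using \<gamma>U by (simp add: z_def)
      define e1 where "e1 = z - q - s *\<^sub>R c \<tau>"
      define e2 where "e2 = d \<tau> - s *\<^sub>R cp \<tau>"
      have e1eq: "e1 = - cscale (g z - G q (z - q)) w"
        using key2[of \<tau>] unfolding e1_def z_def by (simp add: algebra_simps)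
      have e2eq: "e2 = - cscale (G z (d \<tau>) - G q (d \<tau>)) w"
        using key1[of \<tau>] unfolding e2_def z_def by (simp add: algebra_simps)
      have ne1: "norm e1 \<le> \<epsilon> * norm (z - q) * nw"
        unfolding e1eq norm_minus_cancel norm_cscale nw_def
        using Ub2 zU by (intro mult_right_mono) auto
      have ne2: "norm e2 \<le> \<epsilon> * norm (d \<tau>) * nw"
        unfolding e2eq norm_minus_cancel norm_cscale nw_def
        using Ub1 zU by (intro mult_right_mono) auto
      have scn: "norm (s *\<^sub>R c \<tau>) \<le> s * R" "norm (s *\<^sub>R cp \<tau>) \<le> s * R"
        using s cn cpn by (simp_all add: mult_left_mono)
      have nzq: "norm (z - q) \<le> 2 * s * R"
      proof -
        have "norm (z - q) = norm (s *\<^sub>R c \<tau> + e1)" by (simp add: e1_def)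
        also have "\<dots> \<le> s * R + \<epsilon> * norm (z - q) * nw"
          using norm_triangle_ineq[of "s *\<^sub>R c \<tau>" e1] scn ne1 by linarith
        also have "\<epsilon> * norm (z - q) * nw \<le> 1/2 * norm (z - q)"
          using eps(2) by (metis mult.commute mult.left_commute mult_right_mono norm_ge_zero)
        finally show ?thesis by simp
      qed
      have nd: "norm (d \<tau>) \<le> 2 * s * R"
      proof -
        have "norm (d \<tau>) = norm (s *\<^sub>R cp \<tau> + e2)" by (simp add: e2_def)
        also have "\<dots> \<le> s * R + \<epsilon> * norm (d \<tau>) * nw"
          using norm_triangle_ineq[of "s *\<^sub>R cp \<tau>" e2] scn ne2 by linarith
        also have "\<epsilon> * norm (d \<tau>) * nw \<le> 1/2 * norm (d \<tau>)"
          using eps(2) by (metis mult.commute mult.left_commute mult_right_mono norm_ge_zero)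
        finally show ?thesis by simp
      qed
      have ne1': "norm e1 \<le> \<epsilon> * nw * (2 * s * R)"
        using ne1 nzq eps(1) nw by (smt (verit) mult.commute mult.left_commute mult_left_mono mult_nonneg_nonneg)
      have ne2': "norm e2 \<le> \<epsilon> * nw * (2 * s * R)"
        using ne2 nd eps(1) nw by (smt (verit) mult.commute mult.left_commute mult_left_mono mult_nonneg_nonneg)
      have "bil M (z - q) (d \<tau>) - of_real (s * s) * bil M u v = bil M e1 (d \<tau>) + bil M (s *\<^sub>R c \<tau>) e2"
        unfolding e1_def e2_def using bilc[of \<tau>]
        by (simp add: bil_diff1 bil_diff2 bil_scaleR1 bil_scaleR2)
      also have "cmod \<dots> \<le> Kb * norm e1 * norm (d \<tau>) + Kb * norm (s *\<^sub>R c \<tau>) * norm e2"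
        by (rule order_trans[OF norm_triangle_ineq add_mono[OF bilb bilb]])
      also have "\<dots> \<le> Kb * (\<epsilon> * nw * (2 * s * R)) * (2 * s * R) + Kb * (s * R) * (\<epsilon> * nw * (2 * s * R))"
        using Kb ne1' ne2' nd scn by (intro add_mono mult_mono) (auto intro!: mult_nonneg_nonneg simp: eps(1) nw s R less_imp_le)
      also have "\<dots> = B0" by (simp add: B0_def algebra_simps)
      finally show ?thesis by (simp add: z_def)
    qed
    define K where "K = of_real (s * s) * bil M u v"
    define f where "f \<tau> = P (\<gamma> \<tau>) + bil M q (\<gamma> \<tau>) + \<tau> *\<^sub>R K" for \<tau>
    define f' where "f' \<tau> = (Om (\<gamma> \<tau>) (d \<tau>) - bil M (\<gamma> \<tau>) (d \<tau>)) + bil M q (d \<tau>) + K" for \<tau>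
    have fder: "(f has_vector_derivative f' \<tau>) (at \<tau>)" for \<tau>
    proof -
      have "(P has_derivative (\<lambda>w. Om (\<gamma> \<tau>) w - bil M (\<gamma> \<tau>) w)) (at (\<gamma> \<tau>) within range \<gamma>)"
        by (rule has_derivative_at_withinI) (use derP in blast)
      from vector_derivative_diff_chain_within[OF \<gamma>der this]
      have 1: "((P \<circ> \<gamma>) has_vector_derivative (Om (\<gamma> \<tau>) (d \<tau>) - bil M (\<gamma> \<tau>) (d \<tau>))) (at \<tau>)" .
      have "((\<lambda>w. bil M q w) has_derivative (\<lambda>h. bil M q h)) (at (\<gamma> \<tau>) within range \<gamma>)"
        by (rule bil_has_derivative2)
      from vector_derivative_diff_chain_within[OF \<gamma>der this]
      have 2: "(((\<lambda>w. bil M q w) \<circ> \<gamma>) has_vector_derivative bil M q (d \<tau>)) (at \<tau>)" .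
      have 3: "((\<lambda>\<tau>. \<tau> *\<^sub>R K) has_vector_derivative K) (at \<tau>)"
        unfolding has_vector_derivative_def by (auto intro!: derivative_eq_intros)
      have "f = (\<lambda>x. (P \<circ> \<gamma>) x + ((\<lambda>w. bil M q w) \<circ> \<gamma>) x + x *\<^sub>R K)"
        by (simp add: fun_eq_iff f_def)
      then show ?thesis
        using has_vector_derivative_add[OF has_vector_derivative_add[OF 1 2] 3]
        by (simp add: f'_def)
    qed
    have f'b: "norm (f' \<tau>) \<le> B0" for \<tau>
    proof -
      have "f' \<tau> = - (bil M (\<gamma> \<tau> - q) (d \<tau>) - K)"
        using Om0[of \<tau>] by (simp add: f'_def bil_diff1)
      then have "norm (f' \<tau>) = cmod (bil M (\<gamma> \<tau> - q) (d \<tau>) - K)" by (simp only: norm_minus_cancel)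
      then show ?thesis using est[of \<tau>] by (simp add: K_def)
    qed
    have per: "f (2 * pi) - f 0 = (2 * pi) *\<^sub>R K"
    proof -
      have "c (2 * pi) = c 0" by (simp add: c_def)
      then have "\<gamma> (2 * pi) = \<gamma> 0" by (simp add: \<gamma>_def y_def)
      then show ?thesis by (simp add: f_def)
    qed
    have contf: "continuous_on {0..2*pi} f"
      by (rule continuous_at_imp_continuous_on) (use fder has_vector_derivative_continuous in blast)
    obtain x where "norm (f (2 * pi) - f 0) \<le> norm ((2 * pi - 0) *\<^sub>R f' x)"
      using mvt_general[of 0 "2 * pi" f "\<lambda>x t. t *\<^sub>R f' x"] contf fder pi_gt_zero
      unfolding has_vector_derivative_def by auto
    then have "2 * pi * (s * s * Bb) \<le> 2 * pi * norm (f' x)"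
      unfolding per using s by (simp add: K_def Bb_def norm_mult)
    then have "s * s * Bb \<le> norm (f' x)" using pi_gt_zero by simp
    also have "\<dots> \<le> B0" by (rule f'b)
    finally have "s * s * Bb \<le> s * s * (6 * Kb * R * R * \<epsilon> * nw)" by (simp add: B0_def algebra_simps)
    then have "Bb \<le> 6 * Kb * R * R * \<epsilon> * nw" using s by simp
    then show False using eps(3) by simp
  qed
qed


lemma no_im:
  fixes Om :: "complex^'k::finite \<Rightarrow> complex^'k \<Rightarrow> complex"
    and M :: "'k \<Rightarrow> 'k \<Rightarrow> complex" and P :: "complex^'k \<Rightarrow> complex"
  assumes card: "CARD('k) \<ge> 3"
    and anti: "\<forall>i k. M k i = - M i k"
    and nondeg: "\<forall>x::complex^'k. (\<forall>k. (\<Sum>i\<in>UNIV. M i k * x$i) = 0) \<longrightarrow> x = 0"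
    and derP: "\<forall>z. (P has_derivative (\<lambda>w. Om z w - bil M z w)) (at z)"
  shows "\<not> has_integral_manifold Om p"
proof
  assume "has_integral_manifold Om p"
  then obtain U L where IM: "integral_manifold Om p U L" unfolding has_integral_manifold_def by blast
  have N1: "CARD('k) - (CARD('k) - 1) = 1" using card by simp
  have "germ_dim L p (CARD('k) - 1)" using IM unfolding integral_manifold_def by blast
  then obtain q where "regular_dim L q (CARD('k) - 1)" unfolding germ_dim_def by blast
  then obtain W g where RP: "regular_presentation L q (CARD('k) - 1) W g"
    unfolding regular_dim_def by blast
  have oW: "open W" and qW: "q \<in> W" and qL: "q \<in> L"
    and LW: "L \<inter> W = {z\<in>W. g 0 z = 0}"
    using RP unfolding regular_presentation_def N1 by auto
  have Dz: "\<forall>z\<in>W. \<exists>D. (\<forall>i<1. cderiv_at (g i) (D i) z) \<and>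
        (\<forall>c. (\<forall>v. (\<Sum>i<1. c i * D i v) = 0) \<longrightarrow> (\<forall>i<1. c i = (0::complex)))"
    using RP unfolding regular_presentation_def N1 by blast
  have "\<forall>z\<in>W. \<exists>G. cderiv_at (g 0) G z \<and> (\<exists>h. G h \<noteq> 0)"
  proof
    fix z assume "z \<in> W"
    then obtain D where D0: "\<forall>i<1. cderiv_at (g i) (D i) z"
      and D1: "\<forall>c. (\<forall>v. (\<Sum>i<1. c i * D i v) = 0) \<longrightarrow> (\<forall>i<1. c i = (0::complex))"
      using Dz by blast
    have D: "cderiv_at (g 0) (D 0) z" using D0 by simp
    have D2: "(\<forall>v. D 0 v = 0) \<longrightarrow> False"
    proof
      assume "\<forall>v. D 0 v = 0"
      then show False using spec[OF D1, of "\<lambda>_. 1"] by (auto dest: spec[of _ 0])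
    qed
    have "\<exists>h. D 0 h \<noteq> 0"
    proof (rule ccontr)
      assume "\<not> ?thesis"
      then have "\<forall>v. D 0 v = 0" by simp
      then show False using D2 by blast
    qed
    then show "\<exists>G. cderiv_at (g 0) G z \<and> (\<exists>h. G h \<noteq> 0)" using D by blast
  qed
  then obtain G where G: "\<forall>z\<in>W. cderiv_at (g 0) (G z) z \<and> (\<exists>h. G z h \<noteq> 0)"
    by metis
  have gq: "g 0 q = 0" using qL qW LW by blast
  obtain h0 where h0: "G q h0 \<noteq> 0" using G qW by blast
  have tang: "\<forall>z\<in>W. g 0 z = 0 \<longrightarrow> (\<forall>v. G z v = 0 \<longrightarrow> Om z v = 0)"
  proof (intro ballI impI allI)
    fix z v assume zW: "z \<in> W" and gz: "g 0 z = 0" and Gv: "G z v = 0"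
    have zL: "z \<in> L" using zW gz LW by blast
    have RPz: "regular_presentation L z (CARD('k) - 1) W g"
      using RP zL zW unfolding regular_presentation_def by blast
    then have "regular_pt L z" unfolding regular_pt_def regular_dim_def by blast
    then have "tangent_in_kernel Om L z" using IM zL unfolding integral_manifold_def by blast
    then have "\<forall>v. (\<forall>i<CARD('k) - (CARD('k) - 1). G z v = 0) \<longrightarrow> Om z v = 0"
      unfolding tangent_in_kernel_def using RPz G zW N1
      by (elim allE[of _ "CARD('k) - 1"] allE[of _ W] allE[of _ g] allE[of _ "\<lambda>i. G z"]) auto
    then show "Om z v = 0" using Gv by blast
  qed
  show False
    using core[OF card anti nondeg derP oW qW gq _ h0 tang] G by blast
qed

lemma sum_pair: "(\<Sum>i\<in>(UNIV::('m::finite \<times> bool) set). f i) = (\<Sum>j\<in>UNIV. f (j, False) + f (j, True))"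
proof -
  have "(\<Sum>i\<in>(UNIV::('m \<times> bool) set). f i) = (\<Sum>(j, b)\<in>UNIV \<times> UNIV. f (j, b))" by simp
  also have "\<dots> = (\<Sum>j\<in>UNIV. \<Sum>b\<in>UNIV. f (j, b))" by (rule sum.cartesian_product[symmetric])
  also have "\<dots> = (\<Sum>j\<in>UNIV. f (j, False) + f (j, True))" by (simp add: UNIV_bool)
  finally show ?thesis .
qed

definition MJ :: "('m::finite \<Rightarrow> complex) \<Rightarrow> 'm \<times> bool \<Rightarrow> 'm \<times> bool \<Rightarrow> complex" where
  "MJ c i k = c (fst i) * (if snd i then (if k = (fst i, False) then -1 else 0)
                                    else (if k = (fst i, True) then 1 else 0))"

lemma MJ_F: "MJ c (j, False) k * y = (if k = (j, True) then c j * y else 0)"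
  by (simp add: MJ_def)
lemma MJ_T: "MJ c (j, True) k * y = (if k = (j, False) then - (c j * y) else 0)"
  by (simp add: MJ_def)

lemma MJ_anti: "\<forall>i k. MJ c k i = - MJ c i k"
  by (auto simp: MJ_def)

lemma MJ_col: "(\<Sum>i\<in>UNIV. MJ c i k * x $ i) =
   (if snd k then c (fst k) * x $ (fst k, False) else - c (fst k) * x $ (fst k, True))"
proof (cases k)
  case (Pair a b)
  show ?thesis unfolding sum_pair Pair
    by (cases b) (simp_all add: MJ_F MJ_T sum.distrib)
qed

lemma MJ_nondeg:
  assumes "\<forall>j. c j \<noteq> 0"
  shows "\<forall>x::complex^('m::finite \<times> bool). (\<forall>k. (\<Sum>i\<in>UNIV. MJ c i k * x$i) = 0) \<longrightarrow> x = 0"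
proof (intro allI impI)
  fix x :: "complex^('m \<times> bool)"
  assume H: "\<forall>k. (\<Sum>i\<in>UNIV. MJ c i k * x$i) = 0"
  show "x = 0"
  unfolding vec_eq_iff
  proof
    fix i :: "'m \<times> bool"
    obtain a b where i: "i = (a, b)" by (cases i)
    show "x $ i = 0 $ i"
    proof (cases b)
      case True
      have "(\<Sum>i\<in>UNIV. MJ c i (a, False) * x$i) = 0" using H by blast
      then show ?thesis using assms i True by (simp add: MJ_col)
    next
      case False
      have "(\<Sum>i\<in>UNIV. MJ c i (a, True) * x$i) = 0" using H by blast
      then show ?thesis using assms i False by (simp add: MJ_col)
    qed
  qed
qed

lemma MJ_row: "(\<Sum>k\<in>UNIV. MJ c i k * (a * w $ k)) =
   (if snd i then - c (fst i) * a * w $ (fst i, False) else c (fst i) * a * w $ (fst i, True))"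
proof (cases i)
  case (Pair j b)
  show ?thesis unfolding sum_pair Pair
    by (cases b) (simp_all add: MJ_F MJ_T sum.distrib)
qed

lemma bil_MJ: "bil (MJ c) z w = (\<Sum>j\<in>UNIV. c j * (z $ (j, False) * w $ (j, True) - z $ (j, True) * w $ (j, False)))"
proof -
  have "bil (MJ c) z w = (\<Sum>i\<in>UNIV. \<Sum>k\<in>UNIV. MJ c i k * (z $ i * w $ k))"
    unfolding bil_def by (simp add: mult.assoc)
  also have "\<dots> = (\<Sum>j\<in>UNIV. c j * (z $ (j, False) * w $ (j, True) - z $ (j, True) * w $ (j, False)))"
    unfolding MJ_row sum_pair by (simp add: algebra_simps)
  finally show ?thesis .
qed


lemma vec_nth_der: "((\<lambda>x. x $ i) has_derivative (\<lambda>h. h $ i)) F"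
  by (rule bounded_linear.has_derivative[OF bounded_linear_vec_nth has_derivative_ident])

lemma J_part:
  assumes card: "CARD('m::finite \<times> bool) \<ge> 3"
  shows "\<not> has_integral_manifold (Omega_J :: complex^('m \<times> bool) \<Rightarrow> _) 0"
proof -
  have nd: "\<forall>x::complex^('m \<times> bool). (\<forall>k. (\<Sum>i\<in>UNIV. MJ (\<lambda>_. 1) i k * x$i) = 0) \<longrightarrow> x = 0"
    by (rule MJ_nondeg) simp
  have "\<forall>z::complex^('m \<times> bool). ((\<lambda>_. 0) has_derivative (\<lambda>w. Omega_J z w - bil (MJ (\<lambda>_. 1)) z w)) (at z)"
  proof
    fix z :: "complex^('m \<times> bool)"
    have "(\<lambda>w. Omega_J z w - bil (MJ (\<lambda>_. 1)) z w) = (\<lambda>w. 0)"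
      by (simp add: fun_eq_iff bil_MJ Omega_J_def)
    then show "((\<lambda>_. 0) has_derivative (\<lambda>w. Omega_J z w - bil (MJ (\<lambda>_. 1)) z w)) (at z)"
      by simp
  qed
  then show ?thesis by (rule no_im[OF card MJ_anti nd])
qed

lemma A_part:
  fixes A :: "complex^('k::finite)^'k"
  assumes card: "CARD('k) \<ge> 3" and tr: "transpose A = - A" and inv: "invertible A"
  shows "\<not> has_integral_manifold (Omega_A A) 0"
proof (rule no_im[OF card, where M = "\<lambda>i k. A $ i $ k" and P = "\<lambda>_. 0"])
  show "\<forall>i k. A $ k $ i = - A $ i $ k"
  proof (intro allI)
    fix i k
    have "transpose A $ i $ k = (- A) $ i $ k" using tr by simp
    then show "A $ k $ i = - A $ i $ k" by (simp add: transpose_def)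
  qed
  show "\<forall>x::complex^'k. (\<forall>k. (\<Sum>i\<in>UNIV. A $ i $ k * x $ i) = 0) \<longrightarrow> x = 0"
  proof (intro allI impI)
    fix x :: "complex^'k"
    assume H: "\<forall>k. (\<Sum>i\<in>UNIV. A $ i $ k * x $ i) = 0"
    have x0: "x v* A = 0" using H by (simp add: vec_eq_iff vector_matrix_mult_def mult.commute)
    obtain A' where A': "A ** A' = mat 1" using inv unfolding invertible_def by blast
    have "x = x v* (A ** A')" by (simp add: A')
    also have "\<dots> = (x v* A) v* A'" by (simp add: vector_matrix_mul_assoc)
    also have "\<dots> = 0 v* A'" by (simp only: x0)
    also have "\<dots> = 0" by (simp add: vec_eq_iff vector_matrix_mult_def)
    finally show "x = 0" .
  qed
  show "\<forall>z. ((\<lambda>_. 0) has_derivative (\<lambda>w. Omega_A A z w - bil (\<lambda>i k. A $ i $ k) z w)) (at z)"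
  proof
    fix z :: "complex^'k"
    have "(\<lambda>w. Omega_A A z w - bil (\<lambda>i k. A $ i $ k) z w) = (\<lambda>w. 0)"
      by (simp add: fun_eq_iff bil_def Omega_A_def)
    then show "((\<lambda>_. 0) has_derivative (\<lambda>w. Omega_A A z w - bil (\<lambda>i k. A $ i $ k) z w)) (at z)"
      by simp
  qed
qed

lemma l_part:
  fixes l :: "'m::finite \<Rightarrow> nat"
  assumes card: "CARD('m \<times> bool) \<ge> 3"
  shows "\<not> has_integral_manifold (Omega_l l) 0"
proof -
  define c where "c j = (1 + of_nat (l j)) / (2::complex)" for j
  define a where "a j = (1 - of_nat (l j)) / (2::complex)" for j
  define b where "b j = 1 / (of_nat (Suc (l j)) :: complex)" for j
  define P where "P z = (\<Sum>j\<in>UNIV. a j * (z $ (j, False) * z $ (j, True))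
      - b j * z $ (j, False) ^ Suc (l j))" for z :: "complex^('m \<times> bool)"
  have cnz: "\<forall>j. c j \<noteq> 0"
  proof
    fix j
    have "(1 + of_nat (l j) :: complex) \<noteq> 0"
      by (metis of_nat_Suc of_nat_eq_0_iff add.commute nat.simps(3))
    then show "c j \<noteq> 0" by (simp add: c_def)
  qed
  have derP: "\<forall>z. (P has_derivative (\<lambda>w. Omega_l l z w - bil (MJ c) z w)) (at z)"
  proof
    fix z :: "complex^('m \<times> bool)"
    define Dp where "Dp h = (\<Sum>j\<in>UNIV. a j * (z $ (j, False) * h $ (j, True) + h $ (j, False) * z $ (j, True))
       - b j * (of_nat (Suc (l j)) * h $ (j, False) * z $ (j, False) ^ (Suc (l j) - 1)))" for h
    have "\<And>j. j \<in> UNIV \<Longrightarrow> ((\<lambda>x. a j * (x $ (j, False) * x $ (j, True)) - b j * x $ (j, False) ^ Suc (l j))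
       has_derivative (\<lambda>h. a j * (z $ (j, False) * h $ (j, True) + h $ (j, False) * z $ (j, True))
       - b j * (of_nat (Suc (l j)) * h $ (j, False) * z $ (j, False) ^ (Suc (l j) - 1)))) (at z)"
      by (intro has_derivative_diff has_derivative_mult_right has_derivative_mult has_derivative_power vec_nth_der)
    from has_derivative_sum[OF this]
    have "(P has_derivative Dp) (at z)"
      unfolding P_def Dp_def .
    moreover have "Dp = (\<lambda>w. Omega_l l z w - bil (MJ c) z w)"
    proof
      fix w
      have e: "b j * (of_nat (Suc (l j)) * w $ (j, False) * z $ (j, False) ^ (Suc (l j) - 1))
          = z $ (j, False) ^ l j * w $ (j, False)" for j
      proof -
        have "(of_nat (Suc (l j)) :: complex) \<noteq> 0" by (metis of_nat_eq_0_iff nat.simps(3))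
        then show ?thesis by (simp add: b_def field_simps)
      qed
      show "Dp w = Omega_l l z w - bil (MJ c) z w"
        unfolding Dp_def e Omega_l_def bil_MJ sum_subtractf[symmetric]
        by (intro sum.cong refl) (simp add: a_def c_def field_simps)
    qed
    ultimately show "(P has_derivative (\<lambda>w. Omega_l l z w - bil (MJ c) z w)) (at z)" by simp
  qed
  show ?thesis by (rule no_im[OF card MJ_anti[of c] MJ_nondeg[OF cnz] derP])
qed

theorem theorem1p3:
  fixes A :: "complex^('m::finite \<times> bool)^('m \<times> bool)"
    and l :: "'m \<Rightarrow> nat"
  assumes "CARD('m) \<ge> 2"
    and "transpose A = - A"
    and "invertible A"
    and "\<forall>j. l j \<ge> 1"
  shows "\<not> has_integral_manifold (Omega_J :: complex^('m \<times> bool) \<Rightarrow> _) 0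
       \<and> \<not> has_integral_manifold (Omega_A A) 0
       \<and> \<not> has_integral_manifold (Omega_l l) 0"
proof -
  have card: "CARD('m \<times> bool) \<ge> 3" using assms(1) by simp
  show ?thesis using J_part[OF card] A_part[OF card assms(2,3)] l_part[OF card] by blast
qed

end
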